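(* There exist an odd-like binary Euclidean LCD $[14,8,4]$ code and an odd-like binary Euclidean LCD $[16,10,4]$ code, and both are optimal, i.e. $4$ is the largest minimum distance among all binary Euclidean LCD $[14,8]$ codes and among all binary Euclidean LCD $[16,10]$ codes.
   Context: A binary $[n,k,d]$ code is a $k$-dimensional subspace of $\mathbb{F}_2^n$ with minimum nonzero Hamming weight $d$. It is Euclidean LCD if $C\cap C^{\perp_E}=\{0\}$, where $C^{\perp_E}$ is the dual with respect to $\langle x,y\rangle_E=\sum x_iy_i$. A binary code is odd-like if it contains a codeword $x$ with $\sum x_i=1$. An LCD $[n,k]$ code is optimal if its minimum distance is the largest among all LCD $[n,k]$ codes. *)

theory Defs
  imports Main
begin

text \<open>Binary vectors of length n are represented by their supports:
  a vector x in F_2^n is the set of coordinates i < n with x_i = 1.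
  Addition is symmetric difference, the zero vector is the empty set.\<close>

definition vecs :: "nat \<Rightarrow> nat set set" where
  "vecs n = Pow {..<n}"

definition vadd :: "nat set \<Rightarrow> nat set \<Rightarrow> nat set" where
  "vadd x y = (x - y) \<union> (y - x)"

definition wt :: "nat set \<Rightarrow> nat" where
  "wt x = card x"

text \<open>Euclidean inner product over F_2 (True = 1).\<close>
definition inner_E :: "nat set \<Rightarrow> nat set \<Rightarrow> bool" where
  "inner_E x y = odd (card (x \<inter> y))"

text \<open>A binary linear code of length n (a subspace of F_2^n; over F_2 closure
  under addition and containing 0 is exactly being a subspace).\<close>
definition linear_code :: "nat \<Rightarrow> nat set set \<Rightarrow> bool" where
  "linear_code n C \<longleftrightarrow> C \<subseteq> vecs n \<and> {} \<in> C \<and> (\<forall>x\<in>C. \<forall>y\<in>C. vadd x y \<in> C)"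

text \<open>Dimension k: a subspace of F_2^n has dimension k iff it has 2^k elements.\<close>
definition code_nk :: "nat \<Rightarrow> nat \<Rightarrow> nat set set \<Rightarrow> bool" where
  "code_nk n k C \<longleftrightarrow> linear_code n C \<and> card C = 2 ^ k"

text \<open>Minimum nonzero Hamming weight (only meaningful if C has a nonzero word).\<close>
definition min_dist :: "nat set set \<Rightarrow> nat" where
  "min_dist C = Min (wt ` (C - {{}}))"

definition euclid_dual :: "nat \<Rightarrow> nat set set \<Rightarrow> nat set set" where
  "euclid_dual n C = {y \<in> vecs n. \<forall>x\<in>C. \<not> inner_E x y}"

definition LCD :: "nat \<Rightarrow> nat set set \<Rightarrow> bool" where
  "LCD n C \<longleftrightarrow> C \<inter> euclid_dual n C = {{}}"

text \<open>Odd-like: contains a codeword with coordinate sum 1 in F_2, i.e. odd weight.\<close>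
definition odd_like :: "nat set set \<Rightarrow> bool" where
  "odd_like C \<longleftrightarrow> (\<exists>x\<in>C. odd (card x))"

end

theory Submission imports Defs begin
lemma vadd_comm: "vadd x y = vadd y x" by (auto simp: vadd_def)
lemma vadd_assoc: "vadd (vadd x y) z = vadd x (vadd y z)" by (auto simp: vadd_def)
lemma vadd_self[simp]: "vadd x x = {}" by (auto simp: vadd_def)
lemma vadd_empty[simp]: "vadd x {} = x" "vadd {} x = x" by (auto simp: vadd_def)
lemma vadd_cancel: "vadd x y = vadd x z \<Longrightarrow> y = z" by (auto simp: vadd_def set_eq_iff)
lemma vadd_swap: "vadd c e = vadd c' e' \<Longrightarrow> vadd c c' = vadd e e'"
  by (auto simp: vadd_def set_eq_iff)
lemma vadd_sub: "x \<subseteq> A \<Longrightarrow> y \<subseteq> A \<Longrightarrow> vadd x y \<subseteq> A" by (auto simp: vadd_def)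
lemma vadd_fin: "finite x \<Longrightarrow> finite y \<Longrightarrow> finite (vadd x y)" by (auto simp: vadd_def)

lemma card_vadd:
  assumes "finite x" "finite y"
  shows "card (vadd x y) + 2 * card (x \<inter> y) = card x + card y"
proof -
  have e: "vadd x y = (x \<union> y) - (x \<inter> y)" by (auto simp: vadd_def)
  have "card (vadd x y) = card (x \<union> y) - card (x \<inter> y)"
    unfolding e using assms by (intro card_Diff_subset) auto
  moreover have "card x + card y = card (x \<union> y) + card (x \<inter> y)"
    by (rule card_Un_Int[OF assms])
  moreover have "card (x \<inter> y) \<le> card (x \<union> y)" using assms by (intro card_mono) auto
  ultimately show ?thesis by linarith
qed

lemma par_vadd:
  assumes "finite a" "finite x" "finite y"
  shows "odd (card (a \<inter> vadd x y)) = (odd (card (a \<inter> x)) \<noteq> odd (card (a \<inter> y)))"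
proof -
  have e: "a \<inter> vadd x y = vadd (a \<inter> x) (a \<inter> y)" by (auto simp: vadd_def)
  have "card (vadd (a \<inter> x) (a \<inter> y)) + 2 * card ((a \<inter> x) \<inter> (a \<inter> y)) = card (a \<inter> x) + card (a \<inter> y)"
    using assms by (intro card_vadd) auto
  then show ?thesis unfolding e by presburger
qed

fun cw :: "nat set list \<Rightarrow> nat set list" where
 "cw [] = [{}]" | "cw (r#rs) = cw rs @ map (vadd r) (cw rs)"

lemma cw_zero: "{} \<in> set (cw rs)" by (induction rs) auto
lemma cw_mono: "set (cw rs) \<subseteq> set (cw (r#rs))" by auto
lemma cw_row: "r \<in> set (cw (r#rs))" using cw_zero[of rs] by force
lemma cw_rows: "set rs \<subseteq> set (cw rs)"
proof (induction rs)
  case (Cons r rs) then show ?case using cw_row[of r rs] cw_mono[of rs r] by auto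
qed auto
lemma cw_length: "length (cw rs) = 2 ^ length rs" by (induction rs) auto
lemma cw_sub: "\<forall>r\<in>set rs. r \<subseteq> A \<Longrightarrow> x \<in> set (cw rs) \<Longrightarrow> x \<subseteq> A"
  by (induction rs arbitrary: x) (auto simp: vadd_def)
lemma cw_closed: "x \<in> set (cw rs) \<Longrightarrow> y \<in> set (cw rs) \<Longrightarrow> vadd x y \<in> set (cw rs)"
proof (induction rs arbitrary: x y)
  case Nil then show ?case by auto
next
  case (Cons r rs)
  have z8: "(0::nat) < 8" and z10: "(0::nat) < 10" by simp_all
  have a: "vadd (vadd r a) b = vadd r (vadd a b)" for a b by (auto simp: vadd_def)
  have b: "vadd a (vadd r b) = vadd r (vadd a b)" for a b by (auto simp: vadd_def)
  have c: "vadd (vadd r a) (vadd r b) = vadd a b" for a b by (auto simp: vadd_def)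
  from Cons.prems consider "x \<in> set (cw rs)" | x0 where "x0 \<in> set (cw rs)" "x = vadd r x0" by auto
  then show ?case
  proof cases
    case 1
    from Cons.prems consider "y \<in> set (cw rs)" | y0 where "y0 \<in> set (cw rs)" "y = vadd r y0" by auto
    then show ?thesis
    proof cases
      case 1 then show ?thesis using Cons.IH \<open>x \<in> set (cw rs)\<close> by simp
    next
      case 2 then show ?thesis using Cons.IH[of x y0] \<open>x \<in> set (cw rs)\<close> by (simp only: b) simp
    qed
  next
    case 2
    note xx = 2
    from Cons.prems consider "y \<in> set (cw rs)" | y0 where "y0 \<in> set (cw rs)" "y = vadd r y0" by auto
    then show ?thesis
    proof cases
      case 1 then show ?thesis using Cons.IH[of x0 y] xx by (simp only: a) simp
    next
      case 2 then show ?thesis using Cons.IH[of x0 y0] xx by (simp only: c) simp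
    qed
  qed
qed

fun orth :: "nat set list \<Rightarrow> bool" where
  "orth [] = True"
| "orth (r#rs) = (odd (card r) \<and> (\<forall>s\<in>set rs. even (card (r \<inter> s))) \<and> orth rs)"

lemma cw_fin: "\<forall>r\<in>set rs. finite r \<Longrightarrow> x \<in> set (cw rs) \<Longrightarrow> finite x"
  by (induction rs arbitrary: x) (auto intro: vadd_fin)

lemma cw_even:
  assumes "\<forall>r\<in>set rs. finite r" "finite t" "\<forall>s\<in>set rs. even (card (t \<inter> s))" "x \<in> set (cw rs)"
  shows "even (card (t \<inter> x))"
  using assms
proof (induction rs arbitrary: x)
  case Nil then show ?case by auto
next
  case (Cons r rs)
  then consider "x \<in> set (cw rs)" | z where "z \<in> set (cw rs)" "x = vadd r z" by auto
  then show ?case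
  proof cases
    case 1 then show ?thesis using Cons by auto
  next
    case 2
    have "finite z" using cw_fin[of rs z] Cons.prems 2 by auto
    then show ?thesis using 2 Cons par_vadd[of t r z] by auto
  qed
qed

lemma cw_distinct:
  assumes "\<forall>r\<in>set rs. finite r" "orth rs"
  shows "distinct (cw rs)"
  using assms
proof (induction rs)
  case Nil then show ?case by auto
next
  case (Cons r rs)
  have inj: "inj_on (vadd r) X" for X by (meson inj_onI vadd_cancel)
  have disj: False if "x \<in> set (cw rs)" "y \<in> set (cw rs)" "x = vadd r y" for x y
  proof -
    have "vadd x y = r" using that(3) by (auto simp: vadd_def)
    then have "r \<in> set (cw rs)" using cw_closed that by metis
    then have "even (card (r \<inter> r))" using cw_even[of rs r r] Cons.prems by auto
    then show False using Cons.prems by auto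
  qed
  show ?case using Cons disj by (auto simp: distinct_map inj)
qed

lemma cw_card:
  assumes "\<forall>r\<in>set rs. finite r" "orth rs"
  shows "card (set (cw rs)) = 2 ^ length rs"
  using cw_distinct[OF assms] distinct_card cw_length by metis

lemma cw_detect:
  assumes "\<forall>r\<in>set rs. finite r" "orth rs" "y \<in> set (cw rs)" "y \<noteq> {}"
  shows "\<exists>x\<in>set (cw rs). odd (card (x \<inter> y))"
  using assms
proof (induction rs arbitrary: y)
  case Nil then show ?case by auto
next
  case (Cons r rs)
  then consider "y \<in> set (cw rs)" | z where "z \<in> set (cw rs)" "y = vadd r z" by auto
  then show ?case
  proof cases
    case 1 then show ?thesis using Cons cw_mono[of rs r] by auto
  next
    case 2
    have "finite z" using cw_fin[of rs z] Cons.prems 2 by auto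
    moreover have "even (card (r \<inter> z))" using cw_even[of rs r z] Cons.prems 2 by auto
    ultimately have "odd (card (r \<inter> y))" using 2 Cons.prems par_vadd[of r r z] by auto
    then show ?thesis using cw_row[of r rs] by blast
  qed
qed

lemma cw_LCD:
  assumes "\<forall>r\<in>set rs. r \<subseteq> {..<n}" "orth rs"
  shows "LCD n (set (cw rs))"
proof -
  have fin: "\<forall>r\<in>set rs. finite r" using assms(1) finite_subset by blast
  have "y = {}" if yc: "y \<in> set (cw rs)" and yd: "y \<in> euclid_dual n (set (cw rs))" for y
  proof (rule ccontr)
    assume "y \<noteq> {}"
    then obtain x where "x \<in> set (cw rs)" "odd (card (x \<inter> y))" using cw_detect[OF fin assms(2) yc] by auto
    then show False using yd by (auto simp: euclid_dual_def inner_E_def)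
  qed
  moreover have "{} \<in> euclid_dual n (set (cw rs))" by (auto simp: euclid_dual_def inner_E_def vecs_def)
  ultimately show ?thesis unfolding LCD_def using cw_zero by blast
qed

lemma cw_code:
  assumes "\<forall>r\<in>set rs. r \<subseteq> {..<n}" "orth rs" "length rs = k"
  shows "code_nk n k (set (cw rs))"
proof -
  have fin: "\<forall>r\<in>set rs. finite r" using assms(1) finite_subset by blast
  have "set (cw rs) \<subseteq> vecs n" using cw_sub[OF assms(1)] by (auto simp: vecs_def)
  then show ?thesis unfolding code_nk_def linear_code_def
    using cw_card[OF fin assms(2)] assms(3) cw_zero cw_closed by auto
qed

lemma cw_oddlike: "orth (r#rs) \<Longrightarrow> odd_like (set (cw (r#rs)))"
  unfolding odd_like_def using cw_row[of r rs] by auto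

lemma sphere:
  assumes "linear_code n C" "card C = 2 ^ k" "0 < k" "2 ^ n < 2 ^ k * (1 + n + (n choose 2))"
  shows "min_dist C \<le> 4"
proof (rule ccontr)
  assume "\<not> min_dist C \<le> 4"
  then have m: "4 < Min (wt ` (C - {{}}))" unfolding min_dist_def by auto
  have sub: "C \<subseteq> Pow {..<n}" using assms(1) by (auto simp: linear_code_def vecs_def)
  then have finC: "finite C" using finite_subset by blast
  have "card C \<ge> 2" using assms(2,3) by (cases k) auto
  have "C - {{}} \<noteq> {}"
  proof
    assume "C - {{}} = {}"
    then have "C \<subseteq> {{}}" by auto
    then have "card C \<le> 1" using card_mono[of "{{}}" C] by auto
    then show False using \<open>card C \<ge> 2\<close> by auto
  qed
  then have big: "\<forall>x\<in>C - {{}}. 4 < card x" using m finC by (auto simp: wt_def)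
  define E where "E = {e. e \<subseteq> {..<n} \<and> card e \<le> 2}"
  have E: "E = {e. e \<subseteq> {..<n} \<and> card e = 0} \<union> {e. e \<subseteq> {..<n} \<and> card e = 1} \<union> {e. e \<subseteq> {..<n} \<and> card e = 2}"
    unfolding E_def by auto
  have cE: "card E = 1 + n + (n choose 2)"
    unfolding E by (subst card_Un_disjoint, auto simp: n_subsets)+
  have finE: "finite E" unfolding E_def by auto
  have inj: "inj_on (\<lambda>(c, e). vadd c e) (C \<times> E)"
  proof (rule inj_onI, clarsimp)
    fix c e c' e' assume h: "c \<in> C" "e \<in> E" "c' \<in> C" "e' \<in> E" "vadd c e = vadd c' e'"
    have "c = c'"
    proof (rule ccontr)
      assume "c \<noteq> c'"
      then have "vadd c c' \<in> C - {{}}" using h assms(1) by (auto simp: linear_code_def vadd_def)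
      then have "4 < card (vadd c c')" using big by auto
      moreover have "card (vadd c c') \<le> 4"
      proof -
        have "card (vadd e e') \<le> card (e \<union> e')" using h(2,4) unfolding E_def
          by (intro card_mono) (auto simp: vadd_def intro: finite_subset)
        also have "\<dots> \<le> card e + card e'" by (rule card_Un_le)
        finally show ?thesis using vadd_swap[OF h(5)] h(2,4) unfolding E_def by auto
      qed
      ultimately show False by auto
    qed
    then show "c = c' \<and> e = e'" using h(5) vadd_cancel by auto
  qed
  have "(\<lambda>(c, e). vadd c e) ` (C \<times> E) \<subseteq> Pow {..<n}"
    using sub unfolding E_def by (auto simp: vadd_def)
  then have "card (C \<times> E) \<le> card (Pow {..<n})"
    by (intro card_inj_on_le[OF inj]) auto
  then have "2 ^ k * (1 + n + (n choose 2)) \<le> 2 ^ n" using assms(2) cE by (simp add: card_cartesian_product card_Pow)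
  then show False using assms(4) by linarith
qed


definition to_set :: "bool list \<Rightarrow> nat set" where
  "to_set xs = {i. i < length xs \<and> xs ! i}"

lemma ts_sub: "to_set xs \<subseteq> {..<length xs}" by (auto simp: to_set_def)
lemma ts_vadd: "length a = length b \<Longrightarrow> vadd (to_set a) (to_set b) = to_set (map2 (\<noteq>) a b)"
  by (auto simp: to_set_def vadd_def)
lemma ts_int: "length a = length b \<Longrightarrow> to_set a \<inter> to_set b = to_set (map2 (\<and>) a b)"
  by (auto simp: to_set_def)
lemma ts_card: "card (to_set xs) = length (filter id xs)"
  by (simp add: to_set_def length_filter_conv_card)
lemma ts_repl: "to_set (replicate n False) = {}" by (auto simp: to_set_def)

fun w4 :: "nat \<Rightarrow> bool list \<Rightarrow> bool" where
  "w4 k [] = (k = 0)"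
| "w4 k (x#xs) = (if x then (k = Suc (Suc (Suc 0)) \<or> w4 (Suc k) xs) else w4 k xs)"

lemma w4_ok: "w4 k xs \<Longrightarrow> k \<le> 3 \<Longrightarrow> k + length (filter id xs) = 0 \<or> 4 \<le> k + length (filter id xs)"
proof (induction xs arbitrary: k)
  case Nil then show ?case by simp
next
  case (Cons x xs)
  show ?case
  proof (cases x)
    case True
    show ?thesis
    proof (cases "k = 3")
      case True then show ?thesis using \<open>x\<close> by simp
    next
      case False
      then have "w4 (Suc k) xs" "Suc k \<le> 3" using Cons.prems \<open>x\<close> by auto
      then have "4 \<le> Suc k + length (filter id xs)" using Cons.IH by fastforce
      then show ?thesis using \<open>x\<close> by (simp add: id_def)
    qed
  next
    case False
    then show ?thesis using Cons by simp
  qed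
qed

fun chk :: "bool list \<Rightarrow> bool list list \<Rightarrow> bool" where
  "chk acc [] = w4 0 acc"
| "chk acc (r#rs) = (chk acc rs \<and> chk (map2 (\<noteq>) acc r) rs)"

lemma chk_ok:
  "\<forall>r\<in>set rs. length r = length acc \<Longrightarrow> chk acc rs \<Longrightarrow> S \<in> set (cw (map to_set rs))
   \<Longrightarrow> vadd (to_set acc) S = {} \<or> 4 \<le> card (vadd (to_set acc) S)"
proof (induction rs arbitrary: acc S)
  case Nil
  have "length (filter id acc) = 0 \<or> 4 \<le> length (filter id acc)" using w4_ok[of 0 acc] Nil by auto
  moreover have "finite (to_set acc)" using ts_sub finite_subset by blast
  ultimately show ?case using Nil by (auto simp: ts_card[symmetric])
next
  case (Cons r rs)
  then consider "S \<in> set (cw (map to_set rs))" | S0 where "S0 \<in> set (cw (map to_set rs))" "S = vadd (to_set r) S0" by auto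
  then show ?case
  proof cases
    case 1 then show ?thesis using Cons by auto
  next
    case 2
    have e: "vadd (to_set acc) S = vadd (to_set (map2 (\<noteq>) acc r)) S0"
      using 2 Cons.prems(1) by (simp add: vadd_assoc[symmetric] ts_vadd)
    show ?thesis unfolding e using Cons.IH[of "map2 (\<noteq>) acc r" S0] Cons.prems 2 by auto
  qed
qed

fun orthb :: "bool list list \<Rightarrow> bool" where
  "orthb [] = True"
| "orthb (r#rs) = (odd (length (filter id r)) \<and> (\<forall>s\<in>set rs. even (length (filter id (map2 (\<and>) r s)))) \<and> orthb rs)"

lemma orthb_ok: "\<forall>r\<in>set rs. length r = n \<Longrightarrow> orthb rs \<Longrightarrow> orth (map to_set rs)"
  by (induction rs) (auto simp: ts_int ts_card)

lemma orth_oddlike: "orth rs \<Longrightarrow> rs \<noteq> [] \<Longrightarrow> odd_like (set (cw rs))"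
  by (metis cw_oddlike list.exhaust)

lemma final:
  assumes "\<forall>r\<in>set B. length r = n" "orthb B" "chk (replicate n False) B" "length B = k" "0 < k"
    "2 ^ n < 2 ^ k * (1 + n + (n choose 2))"
  shows "code_nk n k (set (cw (map to_set B))) \<and> LCD n (set (cw (map to_set B)))
     \<and> odd_like (set (cw (map to_set B))) \<and> min_dist (set (cw (map to_set B))) = 4"
proof -
  let ?C = "set (cw (map to_set B))"
  have sub: "\<forall>r\<in>set (map to_set B). r \<subseteq> {..<n}" using assms(1) ts_sub by fastforce
  have o: "orth (map to_set B)" using orthb_ok assms(1,2) by blast
  have cn: "code_nk n k ?C" using cw_code[OF sub o] assms(4) by simp
  have lcd: "LCD n ?C" using cw_LCD[OF sub o] .
  have ol: "odd_like ?C" using orth_oddlike[OF o] assms(4,5) by auto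
  have le: "min_dist ?C \<le> 4" using sphere[OF _ _ assms(5,6)] cn unfolding code_nk_def by blast
  have "card ?C = 2 ^ k" using cn unfolding code_nk_def by blast
  moreover have "(2::nat) \<le> 2 ^ k" using assms(5) by (cases k) auto
  ultimately have c2: "card ?C \<ge> 2" by simp
  have "?C - {{}} \<noteq> {}"
  proof
    assume "?C - {{}} = {}"
    then have "?C \<subseteq> {{}}" by auto
    then have "card ?C \<le> 1" using card_mono[of "{{}}" ?C] by auto
    then show False using c2 by auto
  qed
  moreover have "\<forall>x\<in>?C - {{}}. 4 \<le> wt x"
    using chk_ok[of B "replicate n False"] assms(1,3) by (auto simp: ts_repl wt_def)
  ultimately have ge: "4 \<le> min_dist ?C" unfolding min_dist_def by simp
  show ?thesis using cn lcd ol le ge by simp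
qed

definition B14 :: "bool list list" where "B14 = [[True,True,True,True,False,False,True,True,False,True,True,False,True,False], [True,True,False,True,True,True,False,False,True,True,True,False,True,False], [True,False,True,True,True,False,False,False,False,True,True,True,True,True], [False,False,True,True,False,True,True,True,False,True,True,True,False,True], [True,True,False,True,False,True,True,True,True,True,False,False,False,True], [False,False,False,True,True,True,False,True,True,True,False,True,True,True], [True,False,False,True,True,False,False,False,True,False,False,False,False,True], [True,False,True,False,False,False,True,False,False,True,False,False,False,True]]"
definition B16 :: "bool list list" where "B16 = [[False,False,True,False,True,True,False,True,False,False,True,True,True,True,False,True], [True,False,False,True,True,True,True,True,True,True,True,False,False,True,False,True], [False,True,False,False,True,True,True,False,True,True,True,True,False,False,True,False], [True,True,True,False,True,True,False,False,False,False,False,False,False,False,True,True], [False,False,True,False,False,False,True,False,False,False,True,False,False,True,False,True], [False,False,True,True,True,True,False,True,True,False,False,False,True,True,True,False], [False,False,False,False,True,True,False,True,True,False,True,False,True,True,False,False], [False,False,True,True,True,True,False,False,False,False,False,False,False,False,False,True], [True,False,False,True,False,True,False,False,True,False,True,True,False,True,False,False], [True,True,False,False,True,False,True,False,False,False,False,True,True,False,False,True]]"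

lemma B14_chk: "chk (replicate 14 False) B14" unfolding B14_def by code_simp
lemma B16_chk: "chk (replicate 16 False) B16" unfolding B16_def by code_simp
lemma B14_orth: "orthb B14" unfolding B14_def by code_simp
lemma B16_orth: "orthb B16" unfolding B16_def by code_simp
lemma B14_len: "\<forall>r\<in>set B14. length r = 14" "length B14 = 8" unfolding B14_def by simp_all
lemma B16_len: "\<forall>r\<in>set B16. length r = 16" "length B16 = 10" unfolding B16_def by simp_all

theorem proposition3p8:
  shows "(\<exists>C. code_nk 14 8 C \<and> LCD 14 C \<and> odd_like C \<and> min_dist C = 4)
       \<and> (\<exists>C. code_nk 16 10 C \<and> LCD 16 C \<and> odd_like C \<and> min_dist C = 4)
       \<and> (\<forall>C. code_nk 14 8 C \<and> LCD 14 C \<longrightarrow> min_dist C \<le> 4)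
       \<and> (\<forall>C. code_nk 16 10 C \<and> LCD 16 C \<longrightarrow> min_dist C \<le> 4)"
proof -
  have n14: "(2::nat) ^ 14 < 2 ^ 8 * (1 + 14 + (14 choose 2))" by (simp add: choose_two)
  have n16: "(2::nat) ^ 16 < 2 ^ 10 * (1 + 16 + (16 choose 2))" by (simp add: choose_two)
  have z8: "(0::nat) < 8" and z10: "(0::nat) < 10" by simp_all
  have a: "\<exists>C. code_nk 14 8 C \<and> LCD 14 C \<and> odd_like C \<and> min_dist C = 4"
    using final[OF B14_len(1) B14_orth B14_chk B14_len(2) z8 n14] by blast
  have b: "\<exists>C. code_nk 16 10 C \<and> LCD 16 C \<and> odd_like C \<and> min_dist C = 4"
    using final[OF B16_len(1) B16_orth B16_chk B16_len(2) z10 n16] by blast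
  have c: "\<forall>C. code_nk 14 8 C \<and> LCD 14 C \<longrightarrow> min_dist C \<le> 4"
    using sphere[OF _ _ z8 n14] unfolding code_nk_def by blast
  have d: "\<forall>C. code_nk 16 10 C \<and> LCD 16 C \<longrightarrow> min_dist C \<le> 4"
    using sphere[OF _ _ z10 n16] unfolding code_nk_def by blast
  show ?thesis using a b c d by blast
qed

end
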